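(* Let $F$ be an infinite field and let $R$ be a unital $F$-algebra (not necessarily associative) with $\dim_F R<\infty$. Let $f,g,h:R\to F$ be polynomial functions with $f=g\cdot h$ and $g(1)=h(1)=1$. Then $f$ is multiplicative if and only if both $g$ and $h$ are multiplicative.
   Context: A polynomial function $R\to F$ is one given, in coordinates with respect to an $F$-basis $a_1,\dots,a_m$ of $R$, by a polynomial in $F[x_1,\dots,x_m]$. A function $\phi:R\to F$ is multiplicative if $\phi(ab)=\phi(a)\phi(b)$ for all $a,b\in R$. *)

theory Defs
  imports Main
begin

text \<open>An m-dimensional F-vector space R, identified with F^m via coordinates with respect
  to a fixed basis a_1,...,a_m (coordinates indexed 0..m-1, all further coordinates zero).\<close>
definition vecs :: "nat \<Rightarrow> (nat \<Rightarrow> 'a::zero) set" where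
  "vecs m = {x. \<forall>i\<ge>m. x i = 0}"

definition vadd :: "(nat \<Rightarrow> 'a::plus) \<Rightarrow> (nat \<Rightarrow> 'a) \<Rightarrow> (nat \<Rightarrow> 'a)" where
  "vadd x y = (\<lambda>i. x i + y i)"

definition vscale :: "'a::times \<Rightarrow> (nat \<Rightarrow> 'a) \<Rightarrow> (nat \<Rightarrow> 'a)" where
  "vscale c x = (\<lambda>i. c * x i)"

definition unital_algebra :: "nat \<Rightarrow> ((nat \<Rightarrow> 'a::field) \<Rightarrow> (nat \<Rightarrow> 'a) \<Rightarrow> (nat \<Rightarrow> 'a)) \<Rightarrow> (nat \<Rightarrow> 'a) \<Rightarrow> bool" where
  "unital_algebra m mul e \<longleftrightarrow>
     (\<forall>x\<in>vecs m. \<forall>y\<in>vecs m. mul x y \<in> vecs m) \<and>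
     e \<in> vecs m \<and>
     (\<forall>x\<in>vecs m. mul e x = x \<and> mul x e = x) \<and>
     (\<forall>x\<in>vecs m. \<forall>y\<in>vecs m. \<forall>z\<in>vecs m.
        mul (vadd x y) z = vadd (mul x z) (mul y z) \<and>
        mul x (vadd y z) = vadd (mul x y) (mul x z)) \<and>
     (\<forall>c. \<forall>x\<in>vecs m. \<forall>y\<in>vecs m.
        mul (vscale c x) y = vscale c (mul x y) \<and>
        mul x (vscale c y) = vscale c (mul x y))"

inductive_set poly_funs :: "nat \<Rightarrow> ((nat \<Rightarrow> 'a::comm_ring_1) \<Rightarrow> 'a) set" for m where
  const: "(\<lambda>x. c) \<in> poly_funs m"
| coord: "i < m \<Longrightarrow> (\<lambda>x. x i) \<in> poly_funs m"
| add: "p \<in> poly_funs m \<Longrightarrow> q \<in> poly_funs m \<Longrightarrow> (\<lambda>x. p x + q x) \<in> poly_funs m"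
| mult: "p \<in> poly_funs m \<Longrightarrow> q \<in> poly_funs m \<Longrightarrow> (\<lambda>x. p x * q x) \<in> poly_funs m"

definition polynomial_function :: "nat \<Rightarrow> ((nat \<Rightarrow> 'a::comm_ring_1) \<Rightarrow> 'a) \<Rightarrow> bool" where
  "polynomial_function m f \<longleftrightarrow> (\<exists>p\<in>poly_funs m. \<forall>x\<in>vecs m. f x = p x)"

definition multiplicative :: "nat \<Rightarrow> ((nat \<Rightarrow> 'a::field) \<Rightarrow> (nat \<Rightarrow> 'a) \<Rightarrow> (nat \<Rightarrow> 'a)) \<Rightarrow> ((nat \<Rightarrow> 'a) \<Rightarrow> 'a) \<Rightarrow> bool" where
  "multiplicative m mul \<phi> \<longleftrightarrow> (\<forall>a\<in>vecs m. \<forall>b\<in>vecs m. \<phi> (mul a b) = \<phi> a * \<phi> b)"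

end

theory Submission
  imports Defs "HOL-Computational_Algebra.Polynomial"
begin

lemma bezout_poly_aux:
  fixes D P :: "'a::field poly"
  shows "euclidean_size D = n \<Longrightarrow> \<exists>u v g. g = u*P + v*D \<and> g dvd P \<and> g dvd D"
proof (induction n arbitrary: D P rule: less_induct)
  case (less n)
  show ?case
  proof (cases "D = 0")
    case True
    then show ?thesis by (rule_tac x=1 in exI, rule_tac x=0 in exI, auto)
  next
    case False
    then have "euclidean_size (P mod D) < n" using less.prems mod_size_less by blast
    from less.IH[OF this refl, of D]
    obtain u v g where g: "g = u*D + v*(P mod D)" "g dvd D" "g dvd P mod D" by blast
    have PD: "P = (P div D) * D + P mod D" by simp
    have "g = v*P + (u - v*(P div D))*D"
      using g(1) by (simp add: minus_div_mult_eq_mod[symmetric] algebra_simps)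
    moreover have "g dvd P" using g(2,3) PD by (metis dvd_add dvd_mult)
    ultimately show ?thesis using g(2) by blast
  qed
qed

lemma bezout_poly:
  fixes D P :: "'a::field poly"
  shows "\<exists>u v g. g = u*P + v*D \<and> g dvd P \<and> g dvd D"
  using bezout_poly_aux by blast

lemma finite_monic_divisors:
  fixes A :: "'a::field poly"
  shows "A \<noteq> 0 \<Longrightarrow> finite {D. D dvd A \<and> lead_coeff D = 1}"
proof (induction "degree A" arbitrary: A rule: less_induct)
  case less
  show ?case
  proof (cases "degree A = 0")
    case True
    have "{D. D dvd A \<and> lead_coeff D = 1} \<subseteq> {1}"
    proof
      fix D assume D: "D \<in> {D. D dvd A \<and> lead_coeff D = 1}"
      then have "degree D = 0" using dvd_imp_degree_le[of D A] less.prems True by auto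
      then show "D \<in> {1}" using D by (auto elim!: degree_eq_zeroE)
    qed
    then show ?thesis using finite_subset by blast
  next
    case False
    define k where "k = (LEAST k. \<exists>P. P dvd A \<and> degree P > 0 \<and> degree P = k)"
    have ex: "\<exists>P. P dvd A \<and> degree P > 0 \<and> degree P = degree A" using False by (intro exI[of _ A]) auto
    obtain P where P: "P dvd A" "degree P > 0" "degree P = k"
      using LeastI_ex[of "\<lambda>k. \<exists>P. P dvd A \<and> degree P > 0 \<and> degree P = k"] ex
      unfolding k_def by blast
    have kmin: "k \<le> degree P'" if "P' dvd A" "degree P' > 0" for P'
      unfolding k_def by (rule Least_le) (use that in auto)
    have Pnz: "P \<noteq> 0" using P(2) by auto
    define P0 where "P0 = smult (inverse (lead_coeff P)) P"
    have P0: "P0 dvd A" "degree P0 = k" "lead_coeff P0 = 1" "P0 \<noteq> 0"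
      using P Pnz unfolding P0_def by (auto simp: smult_dvd_iff)
    obtain Q where Q: "A = P0 * Q" using P0(1) by (auto elim: dvdE)
    have Qnz: "Q \<noteq> 0" using Q less.prems by auto
    have degQ: "degree Q < degree A" using Q Qnz P0 P(2,3) by (simp add: degree_mult_eq)
    have IH: "finite {D. D dvd Q \<and> lead_coeff D = 1}" using less.hyps[OF degQ Qnz] .
    have "{D. D dvd A \<and> lead_coeff D = 1} \<subseteq>
          {D. D dvd Q \<and> lead_coeff D = 1} \<union> (\<lambda>X. P0 * X) ` {D. D dvd Q \<and> lead_coeff D = 1}"
    proof
      fix D assume D: "D \<in> {D. D dvd A \<and> lead_coeff D = 1}"
      obtain u v g where g: "g = u*P0 + v*D" "g dvd P0" "g dvd D" using bezout_poly by blast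
      have gnz: "g \<noteq> 0" using g(2) P0(4) by auto
      show "D \<in> {D. D dvd Q \<and> lead_coeff D = 1} \<union> (\<lambda>X. P0 * X) ` {D. D dvd Q \<and> lead_coeff D = 1}"
      proof (cases "degree g = 0")
        case True
        then obtain c where c: "g = [:c:]" by (auto elim: degree_eq_zeroE)
        then have cnz: "c \<noteq> 0" using gnz by auto
        have "g * Q = u * A + D * (v * Q)" using g(1) Q by (simp add: algebra_simps)
        moreover have "D dvd u * A + D * (v*Q)" using D by auto
        ultimately have "D dvd [:c:] * Q" using c by simp
        then have "D dvd smult c Q" by simp
        then have "D dvd Q" using cnz by (rule dvd_smult_cancel)
        then show ?thesis using D by auto
      next
        case False
        have "g dvd A" using g(2) P0(1) by (rule dvd_trans)
        then have "k \<le> degree g" using kmin[of g] False by simp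
        moreover have "degree g \<le> degree P0" using dvd_imp_degree_le[OF g(2) P0(4)] .
        ultimately have dg: "degree g = degree P0" using P0(2) by simp
        obtain r where r: "P0 = g * r" using g(2) by (auto elim: dvdE)
        have rnz: "r \<noteq> 0" using r P0(4) by auto
        have "degree P0 = degree g + degree r" using r gnz rnz degree_mult_eq by metis
        then have "degree r = 0" using dg by simp
        then obtain c where c: "r = [:c:]" by (auto elim: degree_eq_zeroE)
        have cnz: "c \<noteq> 0" using c r P0(4) by auto
        have "P0 = smult c g" using r c by simp
        then have "g = smult (inverse c) P0" using cnz by simp
        then have "P0 dvd g" by (simp add: dvd_smult)
        then have "P0 dvd D" using g(3) by (rule dvd_trans)
        then obtain D' where D': "D = P0 * D'" by (auto elim: dvdE)
        have "P0 * D' dvd P0 * Q" using D D' Q by simp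
        then have "D' dvd Q" using P0(4) by simp
        moreover have "lead_coeff D' = 1" using D D' P0(3) by (simp add: lead_coeff_mult)
        ultimately show ?thesis using D' by auto
      qed
    qed
    then show ?thesis using IH finite_subset by blast
  qed
qed


definition ev2 :: "'a::comm_ring_1 poly poly \<Rightarrow> 'a \<Rightarrow> 'a \<Rightarrow> 'a" where
  "ev2 P t s = poly (poly P [:t:]) s"

lemma ev2_bridge: "ev2 P t s = poly (map_poly (\<lambda>q. poly q s) P) t"
  unfolding ev2_def by (induction P) (auto simp: map_poly_pCons)

lemma poly_eq_infinite:
  fixes p q :: "'a::field poly"
  assumes "infinite S" "\<forall>x\<in>S. poly p x = poly q x"
  shows "p = q"
proof (rule ccontr)
  assume "p \<noteq> q"
  then have "p - q \<noteq> 0" by simp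
  then have "finite {x. poly (p - q) x = 0}" by (rule poly_roots_finite)
  moreover have "S \<subseteq> {x. poly (p - q) x = 0}" using assms(2) by auto
  ultimately show False using assms(1) finite_subset by blast
qed

lemma key2:
  fixes G H :: "'a::field poly poly" and A B :: "'a poly"
  assumes inf: "infinite (UNIV::'a set)"
    and eq: "\<forall>t s. ev2 G t s * ev2 H t s = poly A t * poly B s"
    and g0: "ev2 G 0 0 = 1" and h0: "ev2 H 0 0 = 1"
  shows "ev2 G t s = ev2 G t 0 * ev2 G 0 s"
proof -
  have AB0: "poly A 0 * poly B 0 = 1" using eq[rule_format, of 0 0] g0 h0 by simp
  then have Anz: "A \<noteq> 0" and Bnz: "B \<noteq> 0" by auto
  define S where "S = {s. poly B s \<noteq> 0}"
  have "UNIV = S \<union> {s. poly B s = 0}" unfolding S_def by auto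
  then have infS: "infinite S" using inf poly_roots_finite[OF Bnz] by (metis finite_Un)
  define Gs where "Gs s0 = map_poly (\<lambda>q. poly q s0) G" for s0
  define Hs where "Hs s0 = map_poly (\<lambda>q. poly q s0) H" for s0
  have pGs: "poly (Gs s0) t = ev2 G t s0" for s0 t unfolding Gs_def ev2_bridge ..
  have pHs: "poly (Hs s0) t = ev2 H t s0" for s0 t unfolding Hs_def ev2_bridge ..
  have prod: "Gs s0 * Hs s0 = smult (poly B s0) A" for s0
    by (rule poly_eq_infinite[OF inf]) (use eq pGs pHs in \<open>auto simp: mult.commute\<close>)
  define N where "N s0 = smult (inverse (lead_coeff (Gs s0))) (Gs s0)" for s0
  have Gsnz: "Gs s0 \<noteq> 0" if "s0 \<in> S" for s0
    using prod[of s0] that Anz unfolding S_def by auto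
  have Gsdvd: "Gs s0 dvd A" if "s0 \<in> S" for s0
  proof -
    have "A = Gs s0 * smult (inverse (poly B s0)) (Hs s0)"
      using prod[of s0] that unfolding S_def by (simp add: mult_smult_right)
    then show ?thesis by (rule dvdI)
  qed
  have NM: "N ` S \<subseteq> {D. D dvd A \<and> lead_coeff D = 1}"
    using Gsnz Gsdvd unfolding N_def by (auto simp: smult_dvd_iff)
  then have "finite (N ` S)" using finite_monic_divisors[OF Anz] finite_subset by blast
  from pigeonhole_infinite[OF infS this] obtain s1 where s1: "s1 \<in> S"
    and infS': "infinite {s\<in>S. N s = N s1}" by blast
  define D where "D = N s1"
  define n where "n = degree D"
  define L where "L = coeff G n"
  have coeffs: "poly (coeff G k) s0 = poly (smult (coeff D k) L) s0"
    if "s0 \<in> {s\<in>S. N s = N s1}" for s0 k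
  proof -
    have s0S: "s0 \<in> S" and ND: "N s0 = D" using that unfolding D_def by auto
    have lnz: "lead_coeff (Gs s0) \<noteq> 0" using Gsnz[OF s0S] by simp
    have GsD: "Gs s0 = smult (lead_coeff (Gs s0)) D"
      using ND[symmetric] lnz unfolding N_def by simp
    have "degree (Gs s0) = n" unfolding n_def using GsD lnz by (metis degree_smult_eq)
    then have "lead_coeff (Gs s0) = poly L s0" unfolding L_def Gs_def by (simp add: coeff_map_poly)
    then have "coeff (Gs s0) k = poly L s0 * coeff D k" using GsD by (metis coeff_smult)
    then show ?thesis unfolding Gs_def by (simp add: coeff_map_poly mult.commute)
  qed
  have cG: "coeff G k = smult (coeff D k) L" for k
    using poly_eq_infinite[OF infS'] coeffs by blast
  have GsAll: "Gs s0 = smult (poly L s0) D" for s0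
    by (rule poly_eqI) (simp add: Gs_def coeff_map_poly cG mult.commute)
  have ev: "ev2 G t0 s0 = poly L s0 * poly D t0" for t0 s0
    using pGs[of s0 t0] GsAll[of s0] by simp
  show ?thesis using ev g0 by (simp add: algebra_simps)
qed


definition rep2 :: "('a::comm_ring_1 \<Rightarrow> 'a \<Rightarrow> 'a) \<Rightarrow> bool" where
  "rep2 \<phi> \<longleftrightarrow> (\<exists>P. \<forall>t s. \<phi> t s = ev2 P t s)"

lemma rep2_const: "rep2 (\<lambda>t s. c)"
  unfolding rep2_def by (rule exI[of _ "[:[:c:]:]"]) (simp add: ev2_def)

lemma rep2_t: "rep2 (\<lambda>t s. t)"
  unfolding rep2_def by (rule exI[of _ "[:0, 1:]"]) (simp add: ev2_def)

lemma rep2_s: "rep2 (\<lambda>t s. s)"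
  unfolding rep2_def by (rule exI[of _ "[:[:0, 1:]:]"]) (simp add: ev2_def)

lemma rep2_add: "rep2 f \<Longrightarrow> rep2 g \<Longrightarrow> rep2 (\<lambda>t s. f t s + g t s)"
proof -
  assume "rep2 f" "rep2 g"
  then obtain P Q where "\<forall>t s. f t s = ev2 P t s" "\<forall>t s. g t s = ev2 Q t s" unfolding rep2_def by blast
  then show ?thesis unfolding rep2_def by (intro exI[of _ "P + Q"]) (simp add: ev2_def)
qed

lemma rep2_diff: "rep2 f \<Longrightarrow> rep2 g \<Longrightarrow> rep2 (\<lambda>t s. f t s - g t s)"
proof -
  assume "rep2 f" "rep2 g"
  then obtain P Q where "\<forall>t s. f t s = ev2 P t s" "\<forall>t s. g t s = ev2 Q t s" unfolding rep2_def by blast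
  then show ?thesis unfolding rep2_def by (intro exI[of _ "P - Q"]) (simp add: ev2_def)
qed

lemma rep2_mult: "rep2 f \<Longrightarrow> rep2 g \<Longrightarrow> rep2 (\<lambda>t s. f t s * g t s)"
proof -
  assume "rep2 f" "rep2 g"
  then obtain P Q where "\<forall>t s. f t s = ev2 P t s" "\<forall>t s. g t s = ev2 Q t s" unfolding rep2_def by blast
  then show ?thesis unfolding rep2_def by (intro exI[of _ "P * Q"]) (simp add: ev2_def)
qed

lemma vecs_vadd: "(x::nat\<Rightarrow>'a::field) \<in> vecs m \<Longrightarrow> y \<in> vecs m \<Longrightarrow> vadd x y \<in> vecs m"
  by (simp add: vecs_def vadd_def)

lemma vecs_vscale: "(x::nat\<Rightarrow>'a::field) \<in> vecs m \<Longrightarrow> vscale c x \<in> vecs m"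
  by (simp add: vecs_def vscale_def)

lemma one_side:
  fixes mul :: "(nat \<Rightarrow> 'a::field) \<Rightarrow> (nat \<Rightarrow> 'a) \<Rightarrow> (nat \<Rightarrow> 'a)"
  assumes inf: "infinite (UNIV :: 'a set)"
    and alg: "unital_algebra m mul e"
    and pf: "polynomial_function m f" and pg: "polynomial_function m g" and ph: "polynomial_function m h"
    and fgh: "\<forall>x\<in>vecs m. f x = g x * h x"
    and g1: "g e = 1" and h1: "h e = 1"
    and mf: "multiplicative m mul f"
  shows "multiplicative m mul g"
  unfolding multiplicative_def
proof (intro ballI)
  fix a b :: "nat \<Rightarrow> 'a" assume a: "a \<in> vecs m" and b: "b \<in> vecs m"
  note A = alg[unfolded unital_algebra_def]
  have closed: "\<And>x y. x \<in> vecs m \<Longrightarrow> y \<in> vecs m \<Longrightarrow> mul x y \<in> vecs m" using A by blast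
  have e: "e \<in> vecs m" using A by blast
  have unit: "\<And>x. x \<in> vecs m \<Longrightarrow> mul e x = x \<and> mul x e = x" using A by blast
  have distr: "\<And>x y z. x \<in> vecs m \<Longrightarrow> y \<in> vecs m \<Longrightarrow> z \<in> vecs m \<Longrightarrow>
        mul (vadd x y) z = vadd (mul x z) (mul y z) \<and> mul x (vadd y z) = vadd (mul x y) (mul x z)"
    using A by blast
  have sc: "\<And>c x y. x \<in> vecs m \<Longrightarrow> y \<in> vecs m \<Longrightarrow>
        mul (vscale c x) y = vscale c (mul x y) \<and> mul x (vscale c y) = vscale c (mul x y)"
    using A by blast
  define xt where "xt (t::'a) = vadd (vscale (1-t) e) (vscale t a)" for t
  define ys where "ys (s::'a) = vadd (vscale (1-s) e) (vscale s b)" for s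
  define X where "X t s = mul (xt t) (ys s)" for t s
  have xtv: "xt t \<in> vecs m" for t unfolding xt_def using e a by (simp add: vecs_vadd vecs_vscale)
  have ysv: "ys s \<in> vecs m" for s unfolding ys_def using e b by (simp add: vecs_vadd vecs_vscale)
  have Xv: "X t s \<in> vecs m" for t s unfolding X_def using closed xtv ysv by blast
  have xt0: "xt 0 = e" and xt1: "xt 1 = a" unfolding xt_def by (auto simp: vadd_def vscale_def)
  have ys0: "ys 0 = e" and ys1: "ys 1 = b" unfolding ys_def by (auto simp: vadd_def vscale_def)
  have Xt0: "X t 0 = xt t" for t unfolding X_def ys0 using unit xtv by blast
  have X0s: "X 0 s = ys s" for s unfolding X_def xt0 using unit ysv by blast
  have X11: "X 1 1 = mul a b" unfolding X_def xt1 ys1 ..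
  have X00: "X 0 0 = e" using Xt0 xt0 by simp
  define c where "c = mul a b"
  have Xexp: "X t s i = (1-t)*(1-s)* e i + (1-t)*s * b i + t*(1-s) * a i + t*s * c i" for t s i
  proof -
    have "X t s = vadd (mul (vscale (1-t) e) (ys s)) (mul (vscale t a) (ys s))"
      unfolding X_def xt_def using distr e a ysv vecs_vscale by blast
    also have "\<dots> = vadd (vscale (1-t) (mul e (ys s))) (vscale t (mul a (ys s)))"
      using sc e a ysv by simp
    also have "mul e (ys s) = vadd (mul e (vscale (1-s) e)) (mul e (vscale s b))"
      unfolding ys_def using distr e b vecs_vscale by blast
    also have "\<dots> = vadd (vscale (1-s) (mul e e)) (vscale s (mul e b))"
      using sc e b by simp
    also have "mul a (ys s) = vadd (mul a (vscale (1-s) e)) (mul a (vscale s b))"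
      unfolding ys_def using distr e a b vecs_vscale by blast
    also have "\<dots> = vadd (vscale (1-s) (mul a e)) (vscale s (mul a b))"
      using sc e a b by simp
    finally show ?thesis using unit e a b unfolding c_def
      by (simp add: vadd_def vscale_def algebra_simps)
  qed
  have repX: "rep2 (\<lambda>t s. X t s i)" for i
    unfolding Xexp
    by (intro rep2_add rep2_mult rep2_diff rep2_const rep2_t rep2_s)
  have reppoly: "rep2 (\<lambda>t s. p (X t s))" if "p \<in> poly_funs m" for p
    using that
  proof induction
    case (const c) then show ?case by (rule rep2_const)
  next
    case (coord i) then show ?case using repX by simp
  next
    case (add p q) from add(3,4) show ?case by (rule rep2_add)
  next
    case (mult p q) from mult(3,4) show ?case by (rule rep2_mult)
  qed
  have repfun: "rep2 (\<lambda>t s. k (X t s))" if pk: "polynomial_function m k" for k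
  proof -
    obtain p where p: "p \<in> poly_funs m" "\<forall>x\<in>vecs m. k x = p x"
      using pk unfolding polynomial_function_def by blast
    have "(\<lambda>t s. k (X t s)) = (\<lambda>t s. p (X t s))" using p(2) Xv by auto
    then show ?thesis using reppoly[OF p(1)] by simp
  qed
  obtain G where G: "\<forall>t s. g (X t s) = ev2 G t s" using repfun[OF pg] unfolding rep2_def by blast
  obtain H where H: "\<forall>t s. h (X t s) = ev2 H t s" using repfun[OF ph] unfolding rep2_def by blast
  obtain P where P: "\<forall>t s. f (X t s) = ev2 P t s" using repfun[OF pf] unfolding rep2_def by blast
  define Apol where "Apol = map_poly (\<lambda>q. poly q 0) P"
  define Bpol where "Bpol = coeff P 0"
  have "ev2 G t s * ev2 H t s = poly Apol t * poly Bpol s" for t s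
  proof -
    have "ev2 G t s * ev2 H t s = f (X t s)" using G H fgh Xv by metis
    also have "\<dots> = f (xt t) * f (ys s)"
      using mf xtv ysv unfolding multiplicative_def X_def by blast
    also have "\<dots> = ev2 P t 0 * ev2 P 0 s" using P Xt0 X0s by metis
    also have "\<dots> = poly Apol t * poly Bpol s"
      unfolding Apol_def Bpol_def ev2_bridge[of P t 0] by (simp add: ev2_def poly_0_coeff_0)
    finally show ?thesis .
  qed
  moreover have "ev2 G 0 0 = 1" using G X00 g1 by metis
  moreover have "ev2 H 0 0 = 1" using H X00 h1 by metis
  ultimately have "ev2 G 1 1 = ev2 G 1 0 * ev2 G 0 1"
    using key2[OF inf] by blast
  then show "g (mul a b) = g a * g b"
    using G X11 Xt0 X0s xt1 ys1 by metis
qed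

theorem proposition2p4:
  fixes m :: nat
    and mul :: "(nat \<Rightarrow> 'a::field) \<Rightarrow> (nat \<Rightarrow> 'a) \<Rightarrow> (nat \<Rightarrow> 'a)"
    and e :: "nat \<Rightarrow> 'a"
    and f g h :: "(nat \<Rightarrow> 'a) \<Rightarrow> 'a"
  assumes "infinite (UNIV :: 'a set)"
    and "unital_algebra m mul e"
    and "polynomial_function m f" and "polynomial_function m g" and "polynomial_function m h"
    and "\<forall>x\<in>vecs m. f x = g x * h x"
    and "g e = 1" and "h e = 1"
  shows "multiplicative m mul f \<longleftrightarrow> multiplicative m mul g \<and> multiplicative m mul h"
proof
  assume mf: "multiplicative m mul f"
  have "\<forall>x\<in>vecs m. f x = h x * g x" using assms(6) by (simp add: mult.commute)
  then show "multiplicative m mul g \<and> multiplicative m mul h"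
    using one_side[OF assms(1-5,6,7,8) mf] one_side[OF assms(1,2,3,5,4) _ assms(8,7) mf] by blast
next
  assume "multiplicative m mul g \<and> multiplicative m mul h"
  moreover have "\<forall>a\<in>vecs m. \<forall>b\<in>vecs m. mul a b \<in> vecs m"
    using assms(2) unfolding unital_algebra_def by blast
  ultimately show "multiplicative m mul f"
    using assms(6) unfolding multiplicative_def by (simp add: algebra_simps)
qed

end
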